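(* Let $m\ge1$ and let $V\subset(\mathbb C^N)^{\otimes m}$ be the subspace of traceless tensors. Let $(\mathbb C^N)^{\otimes(m+1)}$ be acted on by $\mathrm{End}(\mathbb C^N)\otimes U(\mathfrak{gl}_N)$, where $\mathrm{End}(\mathbb C^N)$ acts on the first tensor factor and $U(\mathfrak{gl}_N)$ acts on the last $m$ factors via $E_{ij}\mapsto\sum_{p=1}^m 1^{\otimes(p-1)}\otimes E_{ij}\otimes1^{\otimes(m-p)}$. Then the action of the element $$\frac{\tilde E(\eta-u)\,E(\eta+u)}{u-\eta}\in\mathrm{End}(\mathbb C^N)\otimes U(\mathfrak{gl}_N)(u)$$ on $(\mathbb C^N)^{\otimes(m+1)}$ preserves the subspace $\mathbb C^N\otimes V$, and on this subspace it coincides with the action of $F(u)\in\mathrm{End}(\mathbb C^N)\otimes U(\mathfrak g)[u]$ (with $U(\mathfrak g)\subset U(\mathfrak{gl}_N)$ acting by restriction).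
   Context: $M=\lfloor N/2\rfloor$. Index set $I=\{-M,\dots,-1,1,\dots,M\}$ if $N=2M$, $I=\{-M,\dots,-1,0,1,\dots,M\}$ if $N=2M+1$; $e_i$ ($i\in I$) basis of $\mathbb C^N$, $E_{ij}$ matrix units. $G=O_N$ is the subgroup of $GL_N$ preserving the symmetric form $\langle e_i,e_j\rangle=\delta_{i,-j}$, or $G=Sp_N$ ($N$ even) preserving the alternating form $\langle e_i,e_j\rangle=\delta_{i,-j}\operatorname{sgn}i$; $\mathfrak g\subset\mathfrak{gl}_N$ its Lie algebra. $\varepsilon_{ij}=\operatorname{sgn}i\operatorname{sgn}j$ for $Sp_N$, $1$ for $O_N$; $F_{ij}=E_{ij}-\varepsilon_{ij}E_{-j,-i}$; $\eta=\frac12$ if $\mathfrak g=\mathfrak{so}_N$, $\eta=-\frac12$ if $\mathfrak g=\mathfrak{sp}_N$. $E(u)=-u+\sum_{i,j}E_{ij}\otimes E_{ji}$, $\tilde E(u)=-u+\sum_{i,j}\varepsilon_{ij}E_{ij}\otimes E_{-i,-j}$ (in $\mathrm{End}(\mathbb C^N)\otimes U(\mathfrak{gl}_N)[u]$), $F(u)=-u-\eta+\sum_{i,j}E_{ij}\otimes F_{ji}$. A tensor $t\in(\mathbb C^N)^{\otimes m}$ is traceless if for every pair of distinct positions $p\ne q$, applying the form $\langle\,,\rangle$ to the $p$-th and $q$-th tensor factors of $t$ gives $0\in(\mathbb C^N)^{\otimes(m-2)}$. *)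

theory Defs
  imports Complex_Main
begin

datatype grp = Orth | Symp

text \<open>Index set I (M = N div 2); basis vector e_i of C^N is indexed by i in I.\<close>
definition idx :: "nat \<Rightarrow> int set" where
  "idx N = {i. i \<noteq> 0 \<and> \<bar>i\<bar> \<le> int (N div 2)} \<union> (if odd N then {0} else {})"

definition form :: "grp \<Rightarrow> int \<Rightarrow> int \<Rightarrow> complex" where
  "form G i j = (if i = - j then (if G = Symp then of_int (sgn i) else 1) else 0)"

definition eps :: "grp \<Rightarrow> int \<Rightarrow> int \<Rightarrow> complex" where
  "eps G i j = (if G = Symp then of_int (sgn i * sgn j) else 1)"

definition eta :: "grp \<Rightarrow> complex" where
  "eta G = (if G = Orth then 1/2 else - 1/2)"

text \<open>Tensors in (C^N)^{\<otimes>k}: coefficient functions on index lists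
  (coefficient of e_{x_1} \<otimes> ... \<otimes> e_{x_k}), vanishing outside valid index lists.\<close>
definition tens :: "nat \<Rightarrow> nat \<Rightarrow> (int list \<Rightarrow> complex) set" where
  "tens N k = {t. \<forall>xs. t xs \<noteq> 0 \<longrightarrow> length xs = k \<and> set xs \<subseteq> idx N}"

text \<open>Matrix unit E_ij acting on the p-th tensor factor (positions counted from 0).\<close>
definition act_pos :: "nat \<Rightarrow> int \<Rightarrow> int \<Rightarrow> (int list \<Rightarrow> complex) \<Rightarrow> (int list \<Rightarrow> complex)" where
  "act_pos p i j t = (\<lambda>xs. if p < length xs \<and> xs ! p = i then t (xs[p := j]) else 0)"

definition gl_act :: "nat \<Rightarrow> int \<Rightarrow> int \<Rightarrow> (int list \<Rightarrow> complex) \<Rightarrow> (int list \<Rightarrow> complex)" where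
  "gl_act m i j t = (\<lambda>xs. \<Sum>p\<in>{1..m}. act_pos p i j t xs)"

definition Eop :: "nat \<Rightarrow> nat \<Rightarrow> complex \<Rightarrow> (int list \<Rightarrow> complex) \<Rightarrow> (int list \<Rightarrow> complex)" where
  "Eop N m u t = (\<lambda>xs. - u * t xs +
     (\<Sum>i\<in>idx N. \<Sum>j\<in>idx N. act_pos 0 i j (gl_act m j i t) xs))"

definition Etop :: "grp \<Rightarrow> nat \<Rightarrow> nat \<Rightarrow> complex \<Rightarrow> (int list \<Rightarrow> complex) \<Rightarrow> (int list \<Rightarrow> complex)" where
  "Etop G N m u t = (\<lambda>xs. - u * t xs +
     (\<Sum>i\<in>idx N. \<Sum>j\<in>idx N. eps G i j * act_pos 0 i j (gl_act m (- i) (- j) t) xs))"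

definition g_act :: "grp \<Rightarrow> nat \<Rightarrow> int \<Rightarrow> int \<Rightarrow> (int list \<Rightarrow> complex) \<Rightarrow> (int list \<Rightarrow> complex)" where
  "g_act G m i j t = (\<lambda>xs. gl_act m i j t xs - eps G i j * gl_act m (- j) (- i) t xs)"

definition Fop :: "grp \<Rightarrow> nat \<Rightarrow> nat \<Rightarrow> complex \<Rightarrow> (int list \<Rightarrow> complex) \<Rightarrow> (int list \<Rightarrow> complex)" where
  "Fop G N m u t = (\<lambda>xs. (- u - eta G) * t xs +
     (\<Sum>i\<in>idx N. \<Sum>j\<in>idx N. act_pos 0 i j (g_act G m j i t) xs))"

definition Sop :: "grp \<Rightarrow> nat \<Rightarrow> nat \<Rightarrow> complex \<Rightarrow> (int list \<Rightarrow> complex) \<Rightarrow> (int list \<Rightarrow> complex)" where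
  "Sop G N m u t = (\<lambda>xs. Etop G N m (eta G - u) (Eop N m (eta G + u) t) xs / (u - eta G))"

text \<open>Traceless: contracting any two distinct positions p, q with the form gives 0.
  The remaining entries of xs index the resulting (m-2)-tensor.\<close>
definition traceless :: "grp \<Rightarrow> nat \<Rightarrow> nat \<Rightarrow> (int list \<Rightarrow> complex) \<Rightarrow> bool" where
  "traceless G N m t = (\<forall>p q xs. p < m \<and> q < m \<and> p \<noteq> q \<and> length xs = m \<and> set xs \<subseteq> idx N \<longrightarrow>
      (\<Sum>a\<in>idx N. \<Sum>b\<in>idx N. form G a b * t (xs[p := a, q := b])) = 0)"

definition Vsp :: "grp \<Rightarrow> nat \<Rightarrow> nat \<Rightarrow> (int list \<Rightarrow> complex) set" where
  "Vsp G N m = {t \<in> tens N m. traceless G N m t}"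

definition CNV :: "grp \<Rightarrow> nat \<Rightarrow> nat \<Rightarrow> (int list \<Rightarrow> complex) set" where
  "CNV G N m = {t \<in> tens N (Suc m). \<forall>i\<in>idx N. (\<lambda>ys. t (i # ys)) \<in> Vsp G N m}"

end

theory Submission
  imports Defs
begin

lemma fin_idx[simp]: "finite (idx N)"
proof -
  have "idx N \<subseteq> {- int (N div 2)..int (N div 2)}" by (auto simp: idx_def)
  then show ?thesis by (rule finite_subset) simp
qed

lemma neg_idx[simp]: "- i \<in> idx N \<longleftrightarrow> i \<in> idx N"
  by (auto simp: idx_def)

lemma idx_nz: "G = Symp \<Longrightarrow> even N \<Longrightarrow> i \<in> idx N \<Longrightarrow> i \<noteq> 0"
  by (auto simp: idx_def)

lemma uminus_idx: "uminus ` idx N = idx N"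
  by (auto simp: image_iff) (metis minus_minus neg_idx)

lemma sum_neg_idx: "(\<Sum>j\<in>idx N. f j) = (\<Sum>j\<in>idx N. f (- j))"
proof -
  have "(\<Sum>j\<in>idx N. f (- j)) = sum f (uminus ` idx N)"
    by (subst sum.reindex) (auto simp: inj_on_def)
  then show ?thesis by (simp add: uminus_idx)
qed

definition Em :: "nat \<Rightarrow> int \<Rightarrow> int \<Rightarrow> (int list \<Rightarrow> complex) \<Rightarrow> int list \<Rightarrow> complex" where
  "Em m a b s zs = (\<Sum>p<m. if zs ! p = a then s (zs[p := b]) else 0)"

lemma gl_slice: "length zs = m \<Longrightarrow> gl_act m a b t (x # zs) = Em m a b (\<lambda>ys. t (x # ys)) zs"
proof -
  assume "length zs = m"
  have "(\<Sum>p\<in>{1..m}. act_pos p a b t (x # zs)) = (\<Sum>k<m. act_pos (Suc k) a b t (x # zs))"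
    using sum.atLeast1_atMost_eq[of "\<lambda>p. act_pos p a b t (x # zs)" m] by simp
  also have "\<dots> = (\<Sum>p<m. if zs ! p = a then t (x # zs[p := b]) else 0)"
    by (rule sum.cong) (auto simp: act_pos_def \<open>length zs = m\<close>)
  finally show ?thesis unfolding gl_act_def Em_def .
qed

lemma act0: "act_pos 0 i j f (x # zs) = (if x = i then f (j # zs) else 0)"
  by (simp add: act_pos_def)

lemma sum_if_eq: "finite A \<Longrightarrow> x \<in> A \<Longrightarrow> (\<Sum>i\<in>A. \<Sum>j\<in>B. if x = i then F i j else 0) = (\<Sum>j\<in>B. F x j)"
proof -
  assume a: "finite A" "x \<in> A"
  have "(\<Sum>i\<in>A. \<Sum>j\<in>B. if x = i then F i j else 0) = (\<Sum>i\<in>A. if x = i then (\<Sum>j\<in>B. F i j) else 0)"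
    by (rule sum.cong) auto
  then show ?thesis using a by simp
qed

definition Pt :: "nat \<Rightarrow> (int list \<Rightarrow> complex) \<Rightarrow> int \<Rightarrow> int list \<Rightarrow> complex" where
  "Pt m t x zs = (\<Sum>p<m. t (zs ! p # zs[p := x]))"

definition Qt :: "grp \<Rightarrow> nat \<Rightarrow> nat \<Rightarrow> (int list \<Rightarrow> complex) \<Rightarrow> int \<Rightarrow> int list \<Rightarrow> complex" where
  "Qt G N m t x zs = (\<Sum>p<m. if zs ! p = - x then (\<Sum>j\<in>idx N. eps G x j * t (j # zs[p := - j])) else 0)"

lemma nth_idx: "set zs \<subseteq> idx N \<Longrightarrow> p < length zs \<Longrightarrow> zs ! p \<in> idx N"
  using nth_mem by blast

lemma sumEm_Pt:
  assumes l: "length zs = m" and s: "set zs \<subseteq> idx N"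
  shows "(\<Sum>j\<in>idx N. Em m j x (\<lambda>ys. t (j # ys)) zs) = Pt m t x zs"
proof -
  have "(\<Sum>j\<in>idx N. Em m j x (\<lambda>ys. t (j # ys)) zs) = (\<Sum>p<m. \<Sum>j\<in>idx N. if zs ! p = j then t (j # zs[p := x]) else 0)"
    unfolding Em_def by (rule sum.swap)
  also have "\<dots> = Pt m t x zs"
    unfolding Pt_def by (rule sum.cong) (auto simp: nth_idx[OF s] l)
  finally show ?thesis .
qed

lemma sumEm_Qt:
  "(\<Sum>j\<in>idx N. eps G x j * Em m (- x) (- j) (\<lambda>ys. t (j # ys)) zs) = Qt G N m t x zs"
proof -
  have "(\<Sum>j\<in>idx N. eps G x j * Em m (- x) (- j) (\<lambda>ys. t (j # ys)) zs) = (\<Sum>p<m. \<Sum>j\<in>idx N. if zs ! p = - x then eps G x j * t (j # zs[p := - j]) else 0)"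
    unfolding Em_def by (simp add: sum_distrib_left if_distrib sum.swap[of _ "idx N"] cong: if_cong)
  also have "\<dots> = Qt G N m t x zs"
    unfolding Qt_def by (rule sum.cong) auto
  finally show ?thesis .
qed

lemma eps_sym: "eps G j x = eps G x j"
  by (simp add: eps_def mult.commute)

lemma E_eq:
  assumes x: "x \<in> idx N" and l: "length zs = m" and s: "set zs \<subseteq> idx N"
  shows "Eop N m u t (x # zs) = - u * t (x # zs) + Pt m t x zs"
proof -
  have "(\<Sum>i\<in>idx N. \<Sum>j\<in>idx N. act_pos 0 i j (gl_act m j i t) (x # zs))
      = (\<Sum>i\<in>idx N. \<Sum>j\<in>idx N. if x = i then Em m j i (\<lambda>ys. t (j # ys)) zs else 0)"
    by (intro sum.cong refl) (simp add: act0 gl_slice[OF l])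
  also have "\<dots> = (\<Sum>j\<in>idx N. Em m j x (\<lambda>ys. t (j # ys)) zs)"
    by (rule sum_if_eq) (simp_all add: x)
  also have "\<dots> = Pt m t x zs" by (rule sumEm_Pt[OF l s])
  finally show ?thesis by (simp add: Eop_def)
qed

lemma Et_eq:
  assumes x: "x \<in> idx N" and l: "length zs = m"
  shows "Etop G N m u t (x # zs) = - u * t (x # zs) + Qt G N m t x zs"
proof -
  have "(\<Sum>i\<in>idx N. \<Sum>j\<in>idx N. eps G i j * act_pos 0 i j (gl_act m (- i) (- j) t) (x # zs))
      = (\<Sum>i\<in>idx N. \<Sum>j\<in>idx N. if x = i then eps G i j * Em m (- i) (- j) (\<lambda>ys. t (j # ys)) zs else 0)"
    by (intro sum.cong refl) (simp add: act0 gl_slice[OF l])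
  also have "\<dots> = (\<Sum>j\<in>idx N. eps G x j * Em m (- x) (- j) (\<lambda>ys. t (j # ys)) zs)"
    by (rule sum_if_eq) (simp_all add: x)
  also have "\<dots> = Qt G N m t x zs" by (rule sumEm_Qt)
  finally show ?thesis by (simp add: Etop_def)
qed

definition Fm :: "nat \<Rightarrow> grp \<Rightarrow> int \<Rightarrow> int \<Rightarrow> (int list \<Rightarrow> complex) \<Rightarrow> int list \<Rightarrow> complex" where
  "Fm m G a b s zs = Em m a b s zs - eps G a b * Em m (- b) (- a) s zs"

lemma F_slice:
  assumes x: "x \<in> idx N" and l: "length zs = m"
  shows "Fop G N m u t (x # zs) = (- u - eta G) * t (x # zs) + (\<Sum>j\<in>idx N. Fm m G j x (\<lambda>ys. t (j # ys)) zs)"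
proof -
  have "(\<Sum>i\<in>idx N. \<Sum>j\<in>idx N. act_pos 0 i j (g_act G m j i t) (x # zs))
      = (\<Sum>i\<in>idx N. \<Sum>j\<in>idx N. if x = i then Fm m G j i (\<lambda>ys. t (j # ys)) zs else 0)"
    by (intro sum.cong refl) (simp add: act0 g_act_def Fm_def gl_slice[OF l])
  also have "\<dots> = (\<Sum>j\<in>idx N. Fm m G j x (\<lambda>ys. t (j # ys)) zs)"
    by (rule sum_if_eq) (simp_all add: x)
  finally show ?thesis by (simp add: Fop_def)
qed

lemma F_eq:
  assumes x: "x \<in> idx N" and l: "length zs = m" and s: "set zs \<subseteq> idx N"
  shows "Fop G N m u t (x # zs) = (- u - eta G) * t (x # zs) + Pt m t x zs - Qt G N m t x zs"
proof -
  have "(\<Sum>j\<in>idx N. Fm m G j x (\<lambda>ys. t (j # ys)) zs)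
    = (\<Sum>j\<in>idx N. Em m j x (\<lambda>ys. t (j # ys)) zs) - (\<Sum>j\<in>idx N. eps G x j * Em m (- x) (- j) (\<lambda>ys. t (j # ys)) zs)"
    by (simp add: Fm_def sum_subtractf eps_sym)
  then show ?thesis using F_slice[OF x l, of G u t] sumEm_Pt[OF l s] sumEm_Qt by simp
qed

lemma form_eq: "form G c d = (if c = - d then form G (- d) d else 0)"
  by (simp add: form_def)

lemma sum_form_left:
  assumes "d \<in> idx N" shows "(\<Sum>c\<in>idx N. form G c d * f c) = form G (- d) d * f (- d)"
proof -
  have "(\<Sum>c\<in>idx N. form G c d * f c) = (\<Sum>c\<in>idx N. if c = - d then form G (- d) d * f c else 0)"
    by (rule sum.cong) (auto simp: form_def)
  then show ?thesis using assms by simp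
qed

lemma sum_form_right:
  assumes "c \<in> idx N" shows "(\<Sum>d\<in>idx N. form G c d * f d) = form G c (- c) * f (- c)"
proof -
  have "(\<Sum>d\<in>idx N. form G c d * f d) = (\<Sum>d\<in>idx N. if d = - c then form G c (- c) * f d else 0)"
    by (rule sum.cong) (auto simp: form_def)
  then show ?thesis using assms by simp
qed

lemma trl_pair:
  assumes tr: "traceless G N m s" and pq: "p < m" "q < m" "p \<noteq> q" and l: "length zs = m" and st: "set zs \<subseteq> idx N"
  shows "(\<Sum>b\<in>idx N. form G (- b) b * s (zs[p := - b, q := b])) = 0"
proof -
  have "(\<Sum>a\<in>idx N. \<Sum>b\<in>idx N. form G a b * s (zs[p := a, q := b])) = 0"
    using tr pq l st unfolding traceless_def by blast
  then have "(\<Sum>b\<in>idx N. \<Sum>a\<in>idx N. form G a b * s (zs[p := a, q := b])) = 0"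
    by (subst sum.swap) simp
  moreover have "(\<Sum>b\<in>idx N. \<Sum>a\<in>idx N. form G a b * s (zs[p := a, q := b])) = (\<Sum>b\<in>idx N. form G (- b) b * s (zs[p := - b, q := b]))"
    by (rule sum.cong) (simp_all add: sum_form_left)
  ultimately show ?thesis by simp
qed

lemma eps_form: "eps G x j = (if G = Symp then - of_int (sgn x) else 1) * form G (- j) j"
  by (simp add: eps_def form_def sgn_minus)

lemma eps_neg: "eps G x (- j) = 2 * eta G * eps G x j"
  by (cases G) (simp_all add: eps_def eta_def sgn_minus)

lemma key:
  assumes trl: "\<forall>i\<in>idx N. traceless G N m (\<lambda>ys. t (i # ys))"
    and l: "length zs = m" and st: "set zs \<subseteq> idx N" and p: "p < m"
  shows "(\<Sum>j\<in>idx N. eps G x j * Pt m t j (zs[p := - j])) = 2 * eta G * (\<Sum>j\<in>idx N. eps G x j * t (j # zs[p := - j]))"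
proof -
  define A where "A = {..<m} - {p}"
  have Pt_split: "Pt m t j (zs[p := - j]) = t (- j # zs[p := j]) + (\<Sum>q\<in>A. t (zs ! q # zs[p := - j, q := j]))" for j
  proof -
    have "Pt m t j (zs[p := - j]) = t (zs[p := - j] ! p # zs[p := - j, p := j]) + (\<Sum>q\<in>A. t (zs[p := - j] ! q # zs[p := - j, q := j]))"
      unfolding Pt_def A_def using p by (simp add: sum.remove)
    also have "\<dots> = t (- j # zs[p := j]) + (\<Sum>q\<in>A. t (zs ! q # zs[p := - j, q := j]))"
      using p l by (intro arg_cong2[where f="(+)"] sum.cong) (auto simp: A_def)
    finally show ?thesis .
  qed
  have "(\<Sum>j\<in>idx N. eps G x j * Pt m t j (zs[p := - j]))
     = (\<Sum>j\<in>idx N. eps G x j * t (- j # zs[p := j])) + (\<Sum>q\<in>A. \<Sum>j\<in>idx N. eps G x j * t (zs ! q # zs[p := - j, q := j]))"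
    by (simp add: Pt_split distrib_left sum.distrib sum_distrib_left sum.swap[of _ A])
  also have "(\<Sum>j\<in>idx N. eps G x j * t (- j # zs[p := j])) = (\<Sum>j\<in>idx N. eps G x (- j) * t (j # zs[p := - j]))"
    by (subst sum_neg_idx) simp
  also have "\<dots> = 2 * eta G * (\<Sum>j\<in>idx N. eps G x j * t (j # zs[p := - j]))"
    by (simp add: eps_neg sum_distrib_left mult.assoc)
  also have "(\<Sum>q\<in>A. \<Sum>j\<in>idx N. eps G x j * t (zs ! q # zs[p := - j, q := j])) = 0"
  proof (rule sum.neutral, rule ballI)
    fix q assume q: "q \<in> A"
    have zq: "zs ! q \<in> idx N" using q l st by (auto simp: A_def intro: nth_idx)
    have "(\<Sum>b\<in>idx N. form G (- b) b * t (zs ! q # zs[p := - b, q := b])) = 0"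
      using trl_pair[of G N m "\<lambda>ys. t (zs ! q # ys)" p q zs] trl zq p q l st by (auto simp: A_def)
    then show "(\<Sum>j\<in>idx N. eps G x j * t (zs ! q # zs[p := - j, q := j])) = 0"
      by (simp add: eps_form[of G x] mult.assoc sum_distrib_left[symmetric])
  qed
  finally show ?thesis by simp
qed

lemma Em_split:
  assumes pq: "p < m" "q < m" "p \<noteq> q" and l: "length zs = m"
  shows "Em m a b s (zs[p := c, q := d]) = (if c = a then s (zs[p := b, q := d]) else 0)
     + (if d = a then s (zs[p := c, q := b]) else 0)
     + (\<Sum>r\<in>{..<m} - {p, q}. if zs ! r = a then s (zs[r := b, p := c, q := d]) else 0)"
proof -
  have e: "{..<m} = insert p (insert q ({..<m} - {p, q}))" using pq by auto
  have "Em m a b s (zs[p := c, q := d]) = (\<Sum>r\<in>insert p (insert q ({..<m} - {p, q})).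
      if zs[p := c, q := d] ! r = a then s (zs[p := c, q := d, r := b]) else 0)"
    unfolding Em_def by (subst e) (rule refl)
  also have "\<dots> = (if c = a then s (zs[p := b, q := d]) else 0)
     + ((if d = a then s (zs[p := c, q := b]) else 0)
     + (\<Sum>r\<in>{..<m} - {p, q}. if zs ! r = a then s (zs[r := b, p := c, q := d]) else 0))"
  proof -
    have h1: "zs[p := c, q := d] ! p = c" "zs[p := c, q := d, p := b] = zs[p := b, q := d]"
      using pq l by (simp_all add: nth_list_update list_update_swap[of q p])
    have h2: "zs[p := c, q := d] ! q = d" "zs[p := c, q := d, q := b] = zs[p := c, q := b]"
      using pq l by simp_all
    have h3: "(zs[p := c, q := d] ! r = a) = (zs ! r = a)" "zs[p := c, q := d, r := b] = zs[r := b, p := c, q := d]"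
      if "r \<in> {..<m} - {p, q}" for r
      using that pq l by (simp_all add: nth_list_update list_update_swap[of r q] list_update_swap[of r p])
    define f where "f r = (if zs[p := c, q := d] ! r = a then s (zs[p := c, q := d, r := b]) else 0)" for r
    have "sum f (insert p (insert q ({..<m} - {p, q}))) = f p + (f q + sum f ({..<m} - {p, q}))"
      using pq by (simp add: sum.insert)
    moreover have "f p = (if c = a then s (zs[p := b, q := d]) else 0)" unfolding f_def h1 ..
    moreover have "f q = (if d = a then s (zs[p := c, q := b]) else 0)" unfolding f_def h2 ..
    moreover have "sum f ({..<m} - {p, q}) = (\<Sum>r\<in>{..<m} - {p, q}. if zs ! r = a then s (zs[r := b, p := c, q := d]) else 0)"
      unfolding f_def by (rule sum.cong) (simp_all add: h3)
    ultimately show ?thesis unfolding f_def by simp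
  qed
  finally show ?thesis by (simp add: add.assoc)
qed

lemma sum_if_eq2: "finite A \<Longrightarrow> a \<in> A \<Longrightarrow> (\<Sum>c\<in>A. \<Sum>d\<in>B. F c d * (if c = a then H d else 0)) = (\<Sum>d\<in>B. F a d * (H d :: complex))"
proof -
  assume f: "finite A" "a \<in> A"
  have "(\<Sum>c\<in>A. \<Sum>d\<in>B. F c d * (if c = a then H d else 0)) = (\<Sum>c\<in>A. if c = a then (\<Sum>d\<in>B. F c d * H d) else 0)"
    by (rule sum.cong) auto
  then show ?thesis using f by simp
qed

lemma contr_Em:
  assumes tr: "traceless G N m s" and pq: "p < m" "q < m" "p \<noteq> q" and l: "length zs = m"
    and st: "set zs \<subseteq> idx N" and a: "a \<in> idx N" and b: "b \<in> idx N"
  shows "(\<Sum>c\<in>idx N. \<Sum>d\<in>idx N. form G c d * Em m a b s (zs[p := c, q := d]))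
     = form G a (- a) * s (zs[p := b, q := - a]) + form G (- a) a * s (zs[p := - a, q := b])"
proof -
  define R where "R = {..<m} - {p, q}"
  have "(\<Sum>c\<in>idx N. \<Sum>d\<in>idx N. form G c d * Em m a b s (zs[p := c, q := d]))
    = (\<Sum>c\<in>idx N. \<Sum>d\<in>idx N. form G c d * (if c = a then s (zs[p := b, q := d]) else 0))
    + (\<Sum>c\<in>idx N. \<Sum>d\<in>idx N. form G c d * (if d = a then s (zs[p := c, q := b]) else 0))
    + (\<Sum>c\<in>idx N. \<Sum>d\<in>idx N. form G c d * (\<Sum>r\<in>R. if zs ! r = a then s (zs[r := b, p := c, q := d]) else 0))"
    by (simp add: Em_split[OF pq l] R_def distrib_left sum.distrib)
  also have "(\<Sum>c\<in>idx N. \<Sum>d\<in>idx N. form G c d * (if c = a then s (zs[p := b, q := d]) else 0))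
     = form G a (- a) * s (zs[p := b, q := - a])"
    using a by (subst sum_if_eq2) (simp_all add: sum_form_right)
  also have "(\<Sum>c\<in>idx N. \<Sum>d\<in>idx N. form G c d * (if d = a then s (zs[p := c, q := b]) else 0))
     = form G (- a) a * s (zs[p := - a, q := b])"
  proof -
    have "(\<Sum>c\<in>idx N. \<Sum>d\<in>idx N. form G c d * (if d = a then s (zs[p := c, q := b]) else 0))
       = (\<Sum>c\<in>idx N. form G c a * s (zs[p := c, q := b]))"
    proof (rule sum.cong)
      fix c
      have "(\<Sum>d\<in>idx N. form G c d * (if d = a then s (zs[p := c, q := b]) else 0))
         = (\<Sum>d\<in>idx N. if d = a then form G c a * s (zs[p := c, q := b]) else 0)"
        by (rule sum.cong) auto
      then show "(\<Sum>d\<in>idx N. form G c d * (if d = a then s (zs[p := c, q := b]) else 0)) = form G c a * s (zs[p := c, q := b])"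
        using a by simp
    qed simp
    then show ?thesis using a by (simp add: sum_form_left)
  qed
  also have "(\<Sum>c\<in>idx N. \<Sum>d\<in>idx N. form G c d * (\<Sum>r\<in>R. if zs ! r = a then s (zs[r := b, p := c, q := d]) else 0)) = 0"
  proof -
    have "(\<Sum>c\<in>idx N. \<Sum>d\<in>idx N. form G c d * (\<Sum>r\<in>R. if zs ! r = a then s (zs[r := b, p := c, q := d]) else 0))
      = (\<Sum>r\<in>R. if zs ! r = a then (\<Sum>c\<in>idx N. \<Sum>d\<in>idx N. form G c d * s (zs[r := b, p := c, q := d])) else 0)"
      by (simp add: sum_distrib_left sum.swap[of _ R] if_distrib cong: if_cong) (rule sum.cong, auto)
    also have "\<dots> = 0"
    proof (rule sum.neutral, rule ballI)
      fix r assume r: "r \<in> R"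
      have "set (zs[r := b]) \<subseteq> idx N" using st b set_update_subset_insert by fastforce
      then have "(\<Sum>c\<in>idx N. \<Sum>d\<in>idx N. form G c d * s (zs[r := b, p := c, q := d])) = 0"
        using tr pq l unfolding traceless_def by simp
      then show "(if zs ! r = a then (\<Sum>c\<in>idx N. \<Sum>d\<in>idx N. form G c d * s (zs[r := b, p := c, q := d])) else 0) = 0"
        by simp
    qed
    finally show ?thesis .
  qed
  finally show ?thesis by simp
qed

lemma form_id1: "(G = Symp \<Longrightarrow> b \<noteq> 0) \<Longrightarrow> form G a (- a) = eps G a b * form G b (- b)"
  by (cases G) (auto simp: form_def eps_def sgn_if)

lemma form_id2: "(G = Symp \<Longrightarrow> b \<noteq> 0) \<Longrightarrow> form G (- a) a = eps G a b * form G (- b) b"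
  by (cases G) (auto simp: form_def eps_def sgn_if)

lemma Fm_traceless:
  assumes tr: "traceless G N m s" and a: "a \<in> idx N" and b: "b \<in> idx N" and nz: "G = Symp \<Longrightarrow> b \<noteq> 0"
  shows "traceless G N m (Fm m G a b s)"
  unfolding traceless_def
proof (intro allI impI)
  fix p q zs assume h: "p < m \<and> q < m \<and> p \<noteq> q \<and> length zs = m \<and> set zs \<subseteq> idx N"
  have na: "- a \<in> idx N" "- b \<in> idx N" using a b by simp_all
  have "(\<Sum>c\<in>idx N. \<Sum>d\<in>idx N. form G c d * Fm m G a b s (zs[p := c, q := d]))
    = (\<Sum>c\<in>idx N. \<Sum>d\<in>idx N. form G c d * Em m a b s (zs[p := c, q := d]))
      - eps G a b * (\<Sum>c\<in>idx N. \<Sum>d\<in>idx N. form G c d * Em m (- b) (- a) s (zs[p := c, q := d]))"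
    by (simp add: Fm_def right_diff_distrib sum_subtractf sum_distrib_left mult.left_commute)
  also have "\<dots> = (form G a (- a) * s (zs[p := b, q := - a]) + form G (- a) a * s (zs[p := - a, q := b]))
     - eps G a b * (form G (- b) b * s (zs[p := - a, q := b]) + form G b (- b) * s (zs[p := b, q := - a]))"
    using h contr_Em[OF tr _ _ _ _ _ a b, of p q zs] contr_Em[OF tr _ _ _ _ _ na(2) na(1), of p q zs] by simp
  also have "\<dots> = 0"
  proof -
    have f1: "form G a (- a) = eps G a b * form G b (- b)" by (rule form_id1[OF nz])
    have f2: "form G (- a) a = eps G a b * form G (- b) b" by (rule form_id2[OF nz])
    show ?thesis by (simp only: f1 f2) (simp add: algebra_simps)
  qed
  finally show "(\<Sum>c\<in>idx N. \<Sum>d\<in>idx N. form G c d * Fm m G a b s (zs[p := c, q := d])) = 0" .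
qed

lemma traceless_cong:
  assumes "traceless G N m s" and "\<And>zs. length zs = m \<Longrightarrow> set zs \<subseteq> idx N \<Longrightarrow> s' zs = s zs"
  shows "traceless G N m s'"
  unfolding traceless_def
proof (intro allI impI)
  fix p q zs assume h: "p < m \<and> q < m \<and> p \<noteq> q \<and> length zs = m \<and> set zs \<subseteq> idx N"
  have "(\<Sum>c\<in>idx N. \<Sum>d\<in>idx N. form G c d * s' (zs[p := c, q := d]))
      = (\<Sum>c\<in>idx N. \<Sum>d\<in>idx N. form G c d * s (zs[p := c, q := d]))"
  proof (intro sum.cong refl)
    fix c d assume "c \<in> idx N" "d \<in> idx N"
    then have "set (zs[p := c, q := d]) \<subseteq> idx N"
      using h set_update_subset_insert by (metis insert_subset subset_trans)
    then show "form G c d * s' (zs[p := c, q := d]) = form G c d * s (zs[p := c, q := d])"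
      using h assms(2) by simp
  qed
  also have "\<dots> = 0" using assms(1) h unfolding traceless_def by blast
  finally show "(\<Sum>c\<in>idx N. \<Sum>d\<in>idx N. form G c d * s' (zs[p := c, q := d])) = 0" .
qed

lemma traceless_lin:
  assumes "traceless G N m s" and "\<And>j. j \<in> idx N \<Longrightarrow> traceless G N m (f j)"
  shows "traceless G N m (\<lambda>zs. k * s zs + (\<Sum>j\<in>idx N. f j zs))"
  unfolding traceless_def
proof (intro allI impI)
  fix p q zs assume h: "p < m \<and> q < m \<and> p \<noteq> q \<and> length zs = m \<and> set zs \<subseteq> idx N"
  have "(\<Sum>c\<in>idx N. \<Sum>d\<in>idx N. form G c d * (k * s (zs[p := c, q := d]) + (\<Sum>j\<in>idx N. f j (zs[p := c, q := d]))))
     = k * (\<Sum>c\<in>idx N. \<Sum>d\<in>idx N. form G c d * s (zs[p := c, q := d]))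
       + (\<Sum>j\<in>idx N. \<Sum>c\<in>idx N. \<Sum>d\<in>idx N. form G c d * f j (zs[p := c, q := d]))"
  proof -
    have "(\<Sum>c\<in>idx N. \<Sum>d\<in>idx N. form G c d * (k * s (zs[p := c, q := d]) + (\<Sum>j\<in>idx N. f j (zs[p := c, q := d]))))
      = k * (\<Sum>c\<in>idx N. \<Sum>d\<in>idx N. form G c d * s (zs[p := c, q := d]))
       + (\<Sum>c\<in>idx N. \<Sum>d\<in>idx N. \<Sum>j\<in>idx N. form G c d * f j (zs[p := c, q := d]))"
      by (simp add: distrib_left sum.distrib sum_distrib_left mult.left_commute)
    also have "(\<Sum>c\<in>idx N. \<Sum>d\<in>idx N. \<Sum>j\<in>idx N. form G c d * f j (zs[p := c, q := d]))
      = (\<Sum>c\<in>idx N. \<Sum>j\<in>idx N. \<Sum>d\<in>idx N. form G c d * f j (zs[p := c, q := d]))"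
      by (rule sum.cong[OF refl], rule sum.swap)
    also have "\<dots> = (\<Sum>j\<in>idx N. \<Sum>c\<in>idx N. \<Sum>d\<in>idx N. form G c d * f j (zs[p := c, q := d]))"
      by (rule sum.swap)
    finally show ?thesis .
  qed
  also have "\<dots> = 0" using assms h unfolding traceless_def by simp
  finally show "(\<Sum>c\<in>idx N. \<Sum>d\<in>idx N. form G c d * (k * s (zs[p := c, q := d]) + (\<Sum>j\<in>idx N. f j (zs[p := c, q := d])))) = 0" .
qed

lemma sum_nz: "sum f A \<noteq> 0 \<Longrightarrow> \<exists>x\<in>A. f x \<noteq> 0"
  by (meson sum.neutral)

lemma zero_off:
  assumes t: "t \<in> tens N (Suc m)" and i: "i \<in> idx N" and a: "a \<in> idx N"
    and nv: "\<not> (length xs = Suc m \<and> set xs \<subseteq> idx N)"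
  shows "act_pos 0 i j (gl_act m a b t) xs = 0"
proof (rule ccontr)
  assume "act_pos 0 i j (gl_act m a b t) xs \<noteq> 0"
  then have x0: "0 < length xs" "xs ! 0 = i" and g: "gl_act m a b t (xs[0 := j]) \<noteq> 0"
    unfolding act_pos_def by (auto split: if_splits)
  from g obtain p where p: "p \<in> {1..m}" and ap: "act_pos p a b t (xs[0 := j]) \<noteq> 0"
    unfolding gl_act_def using sum_nz by blast
  then have pl: "p < length xs" and xp: "xs ! p = a" and tn: "t (xs[0 := j, p := b]) \<noteq> 0"
    unfolding act_pos_def by (auto split: if_splits)
  from tn t have L: "length xs = Suc m" and S: "set (xs[0 := j, p := b]) \<subseteq> idx N"
    unfolding tens_def by auto
  have "set xs \<subseteq> idx N"
  proof
    fix y assume "y \<in> set xs"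
    then obtain k where k: "k < length xs" "xs ! k = y" by (auto simp: in_set_conv_nth)
    show "y \<in> idx N"
    proof (cases "k = 0 \<or> k = p")
      case True then show ?thesis using k x0 xp i a by auto
    next
      case False
      then have "xs[0 := j, p := b] ! k = y" using k by simp
      moreover have "xs[0 := j, p := b] ! k \<in> set (xs[0 := j, p := b])" using k by simp
      ultimately show ?thesis using S by auto
    qed
  qed
  with L nv show False by simp
qed

lemma Eop_tens: "t \<in> tens N (Suc m) \<Longrightarrow> Eop N m u t \<in> tens N (Suc m)"
  unfolding tens_def[of N "Suc m"] mem_Collect_eq
proof (intro allI impI)
  fix xs assume t: "\<forall>xs. t xs \<noteq> 0 \<longrightarrow> length xs = Suc m \<and> set xs \<subseteq> idx N" and e: "Eop N m u t xs \<noteq> 0"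
  show "length xs = Suc m \<and> set xs \<subseteq> idx N"
  proof (rule ccontr)
    assume nv: "\<not> (length xs = Suc m \<and> set xs \<subseteq> idx N)"
    have tt: "t \<in> tens N (Suc m)" using t by (simp add: tens_def)
    have t0: "t xs = 0" using t nv by blast
    then have "Eop N m u t xs = 0" using tt nv t0 by (simp add: Eop_def zero_off)
    with e show False by simp
  qed
qed

lemma Etop_tens: "t \<in> tens N (Suc m) \<Longrightarrow> Etop G N m u t \<in> tens N (Suc m)"
  unfolding tens_def[of N "Suc m"] mem_Collect_eq
proof (intro allI impI)
  fix xs assume t: "\<forall>xs. t xs \<noteq> 0 \<longrightarrow> length xs = Suc m \<and> set xs \<subseteq> idx N" and e: "Etop G N m u t xs \<noteq> 0"
  show "length xs = Suc m \<and> set xs \<subseteq> idx N"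
  proof (rule ccontr)
    assume nv: "\<not> (length xs = Suc m \<and> set xs \<subseteq> idx N)"
    have tt: "t \<in> tens N (Suc m)" using t by (simp add: tens_def)
    have t0: "t xs = 0" using t nv by blast
    then have "Etop G N m u t xs = 0" using tt nv t0 by (simp add: Etop_def zero_off)
    with e show False by simp
  qed
qed

lemma act0_diff: "act_pos 0 i j (\<lambda>xs. f xs - k * g xs) xs = act_pos 0 i j f xs - k * act_pos 0 i j g xs"
  by (simp add: act_pos_def)

lemma Fop_tens: "t \<in> tens N (Suc m) \<Longrightarrow> Fop G N m u t \<in> tens N (Suc m)"
  unfolding tens_def[of N "Suc m"] mem_Collect_eq
proof (intro allI impI)
  fix xs assume t: "\<forall>xs. t xs \<noteq> 0 \<longrightarrow> length xs = Suc m \<and> set xs \<subseteq> idx N" and e: "Fop G N m u t xs \<noteq> 0"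
  show "length xs = Suc m \<and> set xs \<subseteq> idx N"
  proof (rule ccontr)
    assume nv: "\<not> (length xs = Suc m \<and> set xs \<subseteq> idx N)"
    have tt: "t \<in> tens N (Suc m)" using t by (simp add: tens_def)
    have t0: "t xs = 0" using t nv by blast
    then have "Fop G N m u t xs = 0" using tt nv t0
      by (simp add: Fop_def g_act_def act0_diff zero_off)
    with e show False by simp
  qed
qed

lemma Sop_tens: "t \<in> tens N (Suc m) \<Longrightarrow> Sop G N m u t \<in> tens N (Suc m)"
  using Etop_tens[OF Eop_tens, of t N m G "eta G - u" "eta G + u"]
  by (auto simp: tens_def Sop_def)

lemma set_upd_idx: "set zs \<subseteq> idx N \<Longrightarrow> j \<in> idx N \<Longrightarrow> set (zs[p := j]) \<subseteq> idx N"
  using set_update_subset_insert by (metis insert_subset subset_trans)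

lemma Sop_eq_Fop:
  assumes t: "t \<in> CNV G N m" and u: "u \<noteq> eta G"
  shows "Sop G N m u t = Fop G N m u t"
proof
  fix xs
  have tt: "t \<in> tens N (Suc m)" and trl: "\<forall>i\<in>idx N. traceless G N m (\<lambda>ys. t (i # ys))"
    using t by (auto simp: CNV_def Vsp_def)
  show "Sop G N m u t xs = Fop G N m u t xs"
  proof (cases "length xs = Suc m \<and> set xs \<subseteq> idx N")
    case False
    then have "Sop G N m u t xs = 0" "Fop G N m u t xs = 0"
      using Sop_tens[OF tt, of G u] Fop_tens[OF tt, of G u] by (auto simp: tens_def)
    then show ?thesis by simp
  next
    case True
    then obtain x zs where xs: "xs = x # zs" and x: "x \<in> idx N" and l: "length zs = m" and st: "set zs \<subseteq> idx N"
      by (cases xs) auto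
    define S where "S = Eop N m (eta G + u) t"
    define X where "X p = (\<Sum>j\<in>idx N. eps G x j * t (j # zs[p := - j]))" for p
    have QS: "Qt G N m S x zs = (eta G - u) * Qt G N m t x zs"
      unfolding Qt_def sum_distrib_left
    proof (rule sum.cong)
      fix p assume p: "p \<in> {..<m}"
      have "(\<Sum>j\<in>idx N. eps G x j * S (j # zs[p := - j]))
         = (\<Sum>j\<in>idx N. eps G x j * (- (eta G + u) * t (j # zs[p := - j]) + Pt m t j (zs[p := - j])))"
        unfolding S_def by (intro sum.cong refl) (simp add: E_eq l set_upd_idx[OF st])
      also have "\<dots> = - (eta G + u) * X p + (\<Sum>j\<in>idx N. eps G x j * Pt m t j (zs[p := - j]))"
        unfolding X_def by (simp add: distrib_left sum.distrib sum_distrib_left mult.left_commute)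
      also have "\<dots> = (eta G - u) * X p"
        using key[OF trl l st, of p x] p unfolding X_def by (simp add: algebra_simps)
      finally show "(if zs ! p = - x then \<Sum>j\<in>idx N. eps G x j * S (j # zs[p := - j]) else 0)
         = (eta G - u) * (if zs ! p = - x then \<Sum>j\<in>idx N. eps G x j * t (j # zs[p := - j]) else 0)"
        unfolding X_def by simp
    qed simp
    have u': "u - eta G \<noteq> 0" using u by simp
    have "Sop G N m u t (x # zs) = (- (eta G - u) * S (x # zs) + Qt G N m S x zs) / (u - eta G)"
      unfolding Sop_def S_def[symmetric] by (simp add: Et_eq[OF x l])
    also have "\<dots> = ((u - eta G) * (- (eta G + u) * t (x # zs) + Pt m t x zs) - (u - eta G) * Qt G N m t x zs) / (u - eta G)"
      unfolding QS by (simp add: S_def E_eq[OF x l st] algebra_simps)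
    also have "\<dots> = - (eta G + u) * t (x # zs) + Pt m t x zs - Qt G N m t x zs"
      using u' by (simp add: right_diff_distrib[symmetric])
    also have "\<dots> = Fop G N m u t (x # zs)"
      by (simp add: F_eq[OF x l st] algebra_simps)
    finally show ?thesis using xs by simp
  qed
qed

lemma Fop_CNV:
  assumes t: "t \<in> CNV G N m" and ev: "G = Symp \<Longrightarrow> even N"
  shows "Fop G N m u t \<in> CNV G N m"
proof -
  have tt: "t \<in> tens N (Suc m)" and trl: "\<forall>i\<in>idx N. traceless G N m (\<lambda>ys. t (i # ys))"
    using t by (auto simp: CNV_def Vsp_def)
  have FT: "Fop G N m u t \<in> tens N (Suc m)" by (rule Fop_tens[OF tt])
  have "(\<lambda>ys. Fop G N m u t (i # ys)) \<in> Vsp G N m" if i: "i \<in> idx N" for i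
  proof -
    have "(\<lambda>ys. Fop G N m u t (i # ys)) \<in> tens N m"
      unfolding tens_def mem_Collect_eq
    proof (intro allI impI)
      fix ys assume "Fop G N m u t (i # ys) \<noteq> 0"
      then have "length (i # ys) = Suc m \<and> set (i # ys) \<subseteq> idx N"
        using FT unfolding tens_def by blast
      then show "length ys = m \<and> set ys \<subseteq> idx N" by simp
    qed
    moreover have "traceless G N m (\<lambda>ys. Fop G N m u t (i # ys))"
    proof (rule traceless_cong)
      show "traceless G N m (\<lambda>zs. (- u - eta G) * t (i # zs) + (\<Sum>j\<in>idx N. Fm m G j i (\<lambda>ys. t (j # ys)) zs))"
      proof (rule traceless_lin)
        show "traceless G N m (\<lambda>zs. t (i # zs))" using trl i by simp
        fix j assume j: "j \<in> idx N"
        show "traceless G N m (Fm m G j i (\<lambda>ys. t (j # ys)))"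
        proof (rule Fm_traceless)
          show "traceless G N m (\<lambda>ys. t (j # ys))" using trl j by simp
          show "G = Symp \<Longrightarrow> i \<noteq> 0" using idx_nz[OF _ ev i] by simp
        qed (simp_all add: i j)
      qed
    next
      fix zs :: "int list" assume lz: "length zs = m" "set zs \<subseteq> idx N"
      show "Fop G N m u t (i # zs) = (- u - eta G) * t (i # zs) + (\<Sum>j\<in>idx N. Fm m G j i (\<lambda>ys. t (j # ys)) zs)"
        by (rule F_slice[OF i lz(1)])
    qed
    ultimately show ?thesis unfolding Vsp_def by blast
  qed
  with FT show ?thesis unfolding CNV_def by blast
qed

theorem lemma2p3:
  fixes G :: grp and N m :: nat and u :: complex
  assumes "G = Symp \<Longrightarrow> even N"
    and "m \<ge> 1"
    and "u \<noteq> eta G"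
  shows "(\<forall>t\<in>CNV G N m. Sop G N m u t \<in> CNV G N m)
       \<and> (\<forall>t\<in>CNV G N m. Sop G N m u t = Fop G N m u t)"
proof (intro conjI ballI)
  fix t assume t: "t \<in> CNV G N m"
  show "Sop G N m u t = Fop G N m u t" by (rule Sop_eq_Fop[OF t assms(3)])
  then show "Sop G N m u t \<in> CNV G N m" using Fop_CNV[OF t assms(1)] by simp
qed

end
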